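(* Let \(A\) be a geometrically fast set of positive bumps with a fixed marking witnessing this. If \(\mathtt{w}\) is an \(A\)-word and \(x\in J(\mathtt{w})\), then \(\mathtt{w}\) is locally reduced at \(x\) if and only if \(\mathtt{w}\) is freely reduced and \(\operatorname{dest}(a)\subseteq\operatorname{supt}(b)\) whenever \(\mathtt{ab}\) are consecutive symbols in \(\mathtt{w}\). In particular, if \(\mathtt{w}\) is freely reduced and locally reduced at some element of \(J(\mathtt{w})\), then \(\mathtt{w}\) is locally reduced at every element of \(J(\mathtt{w})\).
   Context: \(I=[0,1]\); homeomorphisms act on the right. A positive bump is an element of \(\operatorname{Homeo}_+(I)\) whose support \(\{t:ta\neq t\}\) is a single open interval \((x,y)\) on which \(ta>t\); \(x\), \(y\) are its left and right transition points. \(A\) is geometrically proper if no point is a left transition point of two distinct elements, nor a right transition point of two distinct elements. A marking assigns each \(a\in A\) a marker \(t\in\operatorname{supt}(a)\); for \(a\) with support \((x,y)\), \(\operatorname{src}(a)=(x,t)\), \(\operatorname{dest}(a)=[ta,y)\), \(\operatorname{src}(a^{-1})=\operatorname{dest}(a)\), \(\operatorname{dest}(a^{-1})=\operatorname{src}(a)\). \(A\) is geometrically fast if geometrically proper and the marking makes these feet pairwise disjoint. \(A^{\pm}=A\cup A^{-1}\); \(\operatorname{supt}(a^{-1})=\operatorname{supt}(a)\). An \(A\)-word is a finite string over \(A^{\pm}\), with evaluation \(w\). \(\mathtt{w}\) is locally reduced at \(t\) if it is freely reduced and for every prefix \(\mathtt{ua}\) (\(a\in A^\pm\)), \(tua\neq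 tu\). For a nonempty word with first symbol \(a\), \(J(\mathtt{w}):=\operatorname{supt}(a)\setminus\operatorname{src}(a)\). *)

theory Defs
  imports "HOL-Analysis.Analysis"
begin

text \<open>Homeomorphisms of I = [0,1] are modelled as functions real => real;
they act on the right, so t.a is written a t and t.(ab) = b (a t).\<close>

definition homeo_plus :: "(real \<Rightarrow> real) \<Rightarrow> bool" where
  "homeo_plus f \<longleftrightarrow> (\<exists>g. homeomorphism {0..1} {0..1} f g) \<and> strict_mono_on {0..1} f"

definition supt :: "(real \<Rightarrow> real) \<Rightarrow> real set" where
  "supt f = {t \<in> {0..1}. f t \<noteq> t}"

definition positive_bump :: "(real \<Rightarrow> real) \<Rightarrow> bool" where
  "positive_bump a \<longleftrightarrow> homeo_plus a \<and>
     (\<exists>x y. x < y \<and> supt a = {x<..<y} \<and> (\<forall>t\<in>{x<..<y}. a t > t))"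

definition ltp :: "(real \<Rightarrow> real) \<Rightarrow> real" where "ltp a = Inf (supt a)"
definition rtp :: "(real \<Rightarrow> real) \<Rightarrow> real" where "rtp a = Sup (supt a)"

definition geom_proper :: "(real \<Rightarrow> real) set \<Rightarrow> bool" where
  "geom_proper A \<longleftrightarrow> (\<forall>a\<in>A. \<forall>b\<in>A. a \<noteq> b \<longrightarrow> ltp a \<noteq> ltp b \<and> rtp a \<noteq> rtp b)"

definition src_b :: "((real \<Rightarrow> real) \<Rightarrow> real) \<Rightarrow> (real \<Rightarrow> real) \<Rightarrow> real set" where
  "src_b m a = {ltp a <..< m a}"
definition dest_b :: "((real \<Rightarrow> real) \<Rightarrow> real) \<Rightarrow> (real \<Rightarrow> real) \<Rightarrow> real set" where
  "dest_b m a = {a (m a) ..< rtp a}"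

definition marking :: "(real \<Rightarrow> real) set \<Rightarrow> ((real \<Rightarrow> real) \<Rightarrow> real) \<Rightarrow> bool" where
  "marking A m \<longleftrightarrow> (\<forall>a\<in>A. m a \<in> supt a)"

definition geom_fast_with :: "(real \<Rightarrow> real) set \<Rightarrow> ((real \<Rightarrow> real) \<Rightarrow> real) \<Rightarrow> bool" where
  "geom_fast_with A m \<longleftrightarrow> (\<forall>a\<in>A. positive_bump a) \<and> geom_proper A \<and> marking A m \<and>
     (\<forall>a\<in>A. src_b m a \<inter> dest_b m a = {}) \<and>
     (\<forall>a\<in>A. \<forall>b\<in>A. a \<noteq> b \<longrightarrow>
        src_b m a \<inter> src_b m b = {} \<and> dest_b m a \<inter> dest_b m b = {} \<and> src_b m a \<inter> dest_b m b = {})"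

text \<open>Symbols of A^{\<pm>}: (a, True) is a, (a, False) is a^{-1}.\<close>
type_synonym sym = "(real \<Rightarrow> real) \<times> bool"

definition sym_eval :: "sym \<Rightarrow> real \<Rightarrow> real" where
  "sym_eval s t = (if snd s then fst s t else inv_into {0..1} (fst s) t)"

definition sym_supt :: "sym \<Rightarrow> real set" where "sym_supt s = supt (fst s)"

definition sym_src :: "((real \<Rightarrow> real) \<Rightarrow> real) \<Rightarrow> sym \<Rightarrow> real set" where
  "sym_src m s = (if snd s then src_b m (fst s) else dest_b m (fst s))"
definition sym_dest :: "((real \<Rightarrow> real) \<Rightarrow> real) \<Rightarrow> sym \<Rightarrow> real set" where
  "sym_dest m s = (if snd s then dest_b m (fst s) else src_b m (fst s))"

definition is_A_word :: "(real \<Rightarrow> real) set \<Rightarrow> sym list \<Rightarrow> bool" where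
  "is_A_word A w \<longleftrightarrow> (\<forall>s\<in>set w. fst s \<in> A)"

definition act :: "real \<Rightarrow> sym list \<Rightarrow> real" where
  "act t w = foldl (\<lambda>x s. sym_eval s x) t w"

definition freely_reduced :: "sym list \<Rightarrow> bool" where
  "freely_reduced w \<longleftrightarrow> (\<forall>i. Suc i < length w \<longrightarrow>
      \<not> (fst (w ! i) = fst (w ! Suc i) \<and> snd (w ! i) \<noteq> snd (w ! Suc i)))"

definition locally_reduced_at :: "real \<Rightarrow> sym list \<Rightarrow> bool" where
  "locally_reduced_at t w \<longleftrightarrow> freely_reduced w \<and>
     (\<forall>u s. (\<exists>v. u @ s # v = w) \<longrightarrow> act t (u @ [s]) \<noteq> act t u)"

definition J :: "((real \<Rightarrow> real) \<Rightarrow> real) \<Rightarrow> sym list \<Rightarrow> real set" where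
  "J m w = (case w of [] \<Rightarrow> {} | s # _ \<Rightarrow> sym_supt s - sym_src m s)"

end

theory Submission
  imports Defs
begin

lemma bump_facts:
  assumes "positive_bump a"
  shows "ltp a < rtp a" "supt a = {ltp a<..<rtp a}" "\<forall>t\<in>supt a. a t > t"
    "0 \<le> ltp a" "rtp a \<le> 1" "a ` {0..1} = {0..1}" "strict_mono_on {0..1} a"
    "inj_on a {0..1}"
proof -
  obtain x y where xy: "x < y" "supt a = {x<..<y}" "\<forall>t\<in>{x<..<y}. a t > t"
    using assms unfolding positive_bump_def by blast
  have l: "ltp a = x" unfolding ltp_def using xy cInf_greaterThanLessThan by simp
  have r: "rtp a = y" unfolding rtp_def using xy cSup_greaterThanLessThan by simp
  show "ltp a < rtp a" "supt a = {ltp a<..<rtp a}" "\<forall>t\<in>supt a. a t > t"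
    using xy l r by auto
  have "{x<..<y} \<subseteq> {0..1}" using xy(2) unfolding supt_def by auto
  then have "0 \<le> x \<and> y \<le> 1"
    by (metis greaterThanLessThan_subseteq_atLeastAtMost_iff xy(1))
  then show "0 \<le> ltp a" "rtp a \<le> 1" using l r by auto
  have hp: "homeo_plus a" using assms unfolding positive_bump_def by blast
  then show "a ` {0..1} = {0..1}" unfolding homeo_plus_def
    using homeomorphism_image1 by blast
  show sm: "strict_mono_on {0..1} a" using hp unfolding homeo_plus_def by blast
  show "inj_on a {0..1}" using strict_mono_on_imp_inj_on[OF sm] .
qed

locale gf =
  fixes A :: "(real \<Rightarrow> real) set" and m :: "(real \<Rightarrow> real) \<Rightarrow> real"
  assumes gfw: "geom_fast_with A m"
begin

lemma pb_all: "\<forall>a\<in>A. positive_bump a"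
  using gfw unfolding geom_fast_with_def by (elim conjE)

lemma mk_all: "marking A m"
  using gfw unfolding geom_fast_with_def by (elim conjE)

lemma sd_all: "\<forall>a\<in>A. src_b m a \<inter> dest_b m a = {}"
  using gfw unfolding geom_fast_with_def by (elim conjE)

lemma pair_all: "\<forall>a\<in>A. \<forall>b\<in>A. a \<noteq> b \<longrightarrow>
        src_b m a \<inter> src_b m b = {} \<and> dest_b m a \<inter> dest_b m b = {} \<and> src_b m a \<inter> dest_b m b = {}"
  using gfw unfolding geom_fast_with_def by (elim conjE)

lemma pb: "a \<in> A \<Longrightarrow> positive_bump a"
  using pb_all by blast

lemma mk: "a \<in> A \<Longrightarrow> m a \<in> supt a"
  using mk_all unfolding marking_def by blast

lemma mono_lt: assumes "a \<in> A" "u \<in> {0..1}" "v \<in> {0..1}" "u < v" shows "a u < a v"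
  using strict_mono_onD[OF bump_facts(7)[OF pb[OF assms(1)]] assms(2,3,4)] .

lemma mono_le: assumes "a \<in> A" "u \<in> {0..1}" "v \<in> {0..1}" "u \<le> v" shows "a u \<le> a v"
proof (cases "u = v")
  case False
  then have "u < v" using assms by simp
  then show ?thesis using mono_lt[OF assms(1-3)] by simp
qed simp

lemma fix_out: assumes "a \<in> A" "u \<in> {0..1}" "u \<notin> supt a" shows "a u = u"
  using assms unfolding supt_def by auto

lemma basic: assumes "a \<in> A"
  shows "ltp a < m a" "m a < a (m a)" "a (m a) < rtp a" "0 \<le> ltp a" "rtp a \<le> 1"
    "supt a = {ltp a<..<rtp a}"
proof -
  note bf = bump_facts[OF pb[OF assms]]
  have mm: "m a \<in> supt a" using mk[OF assms] .
  show "ltp a < m a" "m a < a (m a)" using mm bf(2,3) by auto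
  have "rtp a \<in> {0..1}" "rtp a \<notin> supt a" "m a \<in> {0..1}" "m a < rtp a"
    using bf mm by auto
  then have "a (m a) < a (rtp a)" "a (rtp a) = rtp a"
    using mono_lt[OF assms, of "m a" "rtp a"] fix_out[OF assms, of "rtp a"] by auto
  then show "a (m a) < rtp a" by simp
  show "0 \<le> ltp a" "rtp a \<le> 1" "supt a = {ltp a<..<rtp a}" using bf by auto
qed

lemma supt01: "a \<in> A \<Longrightarrow> supt a \<subseteq> {0..1}"
  unfolding supt_def by auto

lemma dest_supt: "fst s \<in> A \<Longrightarrow> sym_dest m s \<subseteq> sym_supt s"
  using basic[of "fst s"]
  unfolding sym_dest_def sym_supt_def dest_b_def src_b_def by auto

lemma src_supt: "fst s \<in> A \<Longrightarrow> sym_src m s \<subseteq> sym_supt s"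
  using basic[of "fst s"]
  unfolding sym_src_def sym_supt_def dest_b_def src_b_def by auto

lemma inv_facts: assumes "a \<in> A" "t \<in> {0..1}"
  shows "inv_into {0..1} a t \<in> {0..1}" "a (inv_into {0..1} a t) = t"
proof -
  have ta: "t \<in> a ` {0..1}" using bump_facts(6)[OF pb[OF assms(1)]] assms(2) by simp
  show "inv_into {0..1} a t \<in> {0..1}" by (rule inv_into_into[OF ta])
  show "a (inv_into {0..1} a t) = t" by (rule f_inv_into_f[OF ta])
qed

lemma moves: assumes "fst s \<in> A" "t \<in> sym_supt s" shows "sym_eval s t \<noteq> t"
proof -
  obtain a b where s: "s = (a, b)" by force
  have a: "a \<in> A" using assms s by simp
  have t: "t \<in> supt a" using assms s unfolding sym_supt_def by simp
  then have t01: "t \<in> {0..1}" and at: "a t \<noteq> t" unfolding supt_def by auto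
  show ?thesis
  proof (cases b)
    case True then show ?thesis using s at unfolding sym_eval_def by simp
  next
    case False
    show ?thesis
    proof
      assume "sym_eval s t = t"
      then have "inv_into {0..1} a t = t" using s False unfolding sym_eval_def by simp
      then show False using inv_facts(2)[OF a t01] at by simp
    qed
  qed
qed

lemma fixes_out: assumes "fst s \<in> A" "t \<in> {0..1}" "t \<notin> sym_supt s" shows "sym_eval s t = t"
proof -
  obtain a b where s: "s = (a, b)" by force
  have a: "a \<in> A" using assms s by simp
  have at: "a t = t" using fix_out[OF a assms(2)] assms s unfolding sym_supt_def by simp
  show ?thesis
  proof (cases b)
    case True then show ?thesis using s at unfolding sym_eval_def by simp
  next
    case False
    have "inv_into {0..1} a (a t) = t"
      using inv_into_f_f[OF bump_facts(8)[OF pb[OF a]] assms(2)] .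
    then show ?thesis using s False at unfolding sym_eval_def by simp
  qed
qed

lemma ping: assumes "fst s \<in> A" "t \<in> sym_supt s" "t \<notin> sym_src m s"
  shows "sym_eval s t \<in> sym_dest m s"
proof -
  obtain a b where s: "s = (a, b)" by force
  have a: "a \<in> A" using assms s by simp
  note ba = basic[OF a]
  have t: "ltp a < t" "t < rtp a" using assms(2) s ba(6) unfolding sym_supt_def by auto
  have t01: "t \<in> {0..1}" "m a \<in> {0..1}" "ltp a \<in> {0..1}" "rtp a \<in> {0..1}"
    using t ba by auto
  have fl: "a (ltp a) = ltp a" "a (rtp a) = rtp a"
    using fix_out[OF a] t01 ba(6) by auto
  show ?thesis
  proof (cases b)
    case True
    then have "\<not> t < m a" using assms(3) s t unfolding sym_src_def src_b_def by auto
    then have "a (m a) \<le> a t" using mono_le[OF a] t01 by simp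
    moreover have "a t < rtp a" using mono_lt[OF a t01(1) t01(4) t(2)] fl(2) by simp
    ultimately show ?thesis using s True unfolding sym_eval_def sym_dest_def dest_b_def by simp
  next
    case False
    then have tl: "t < a (m a)" using assms(3) s t unfolding sym_src_def dest_b_def by auto
    define t' where "t' = inv_into {0..1} a t"
    have t': "t' \<in> {0..1}" "a t' = t" using inv_facts[OF a t01(1)] t'_def by auto
    have "ltp a < t'"
    proof (rule ccontr)
      assume "\<not> ltp a < t'"
      then have "a t' \<le> a (ltp a)" using mono_le[OF a t'(1) t01(3)] by simp
      then show False using t' fl t by simp
    qed
    moreover have "t' < m a"
    proof (rule ccontr)
      assume "\<not> t' < m a"
      then have "a (m a) \<le> a t'" using mono_le[OF a t01(2) t'(1)] by simp
      then show False using t' tl by simp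
    qed
    ultimately show ?thesis using s False t'_def
      unfolding sym_eval_def sym_dest_def src_b_def by simp
  qed
qed

lemma disj: assumes "fst s \<in> A" "fst s' \<in> A" "\<not> (fst s = fst s' \<and> snd s \<noteq> snd s')"
  shows "sym_dest m s \<inter> sym_src m s' = {}"
proof (cases "fst s = fst s'")
  case True
  then have e: "snd s = snd s'" using assms by simp
  have "src_b m (fst s) \<inter> dest_b m (fst s) = {}" using sd_all assms(1) by blast
  then show ?thesis using True e
    unfolding sym_dest_def sym_src_def by (cases "snd s") (auto simp: Int_commute)
next
  case False
  have P: "src_b m (fst s) \<inter> src_b m (fst s') = {}" "dest_b m (fst s) \<inter> dest_b m (fst s') = {}"
    "src_b m (fst s) \<inter> dest_b m (fst s') = {}" "src_b m (fst s') \<inter> dest_b m (fst s) = {}"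
    using pair_all assms(1,2) False by metis+
  show ?thesis
    unfolding sym_dest_def sym_src_def
    by (cases "snd s"; cases "snd s'") (use P in \<open>auto simp: Int_commute\<close>)
qed

lemma geo1:
  fixes al r p mb bb q e d :: real
  assumes "p < mb" "mb < bb" "bb < q"
    "\<forall>x. al \<le> x \<and> x < r \<longrightarrow> \<not>(p<x \<and> x<mb)"
    "\<forall>x. al \<le> x \<and> x < r \<longrightarrow> \<not>(bb \<le> x \<and> x < q)"
    "al \<le> e" "e<r" "p<e" "e<q" "al \<le> d" "d < r" "\<not>(p<d \<and> d<q)"
  shows False
proof (cases "d \<le> p")
  case True
  define x where "x = (p + min mb r)/2"
  have "p < x" "x < mb" "x < r" "al \<le> x" using True assms unfolding x_def by auto
  then show ?thesis using assms(4) by blast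
next
  case False
  define x where "x = (max bb al + q)/2"
  have "bb \<le> x" "x < q" "x < r" "al \<le> x" using False assms unfolding x_def by auto
  then show ?thesis using assms(5) by blast
qed

lemma geo2:
  fixes l r p mb bb q e d :: real
  assumes "p < mb" "mb < bb" "bb < q"
    "\<forall>x. l < x \<and> x < r \<longrightarrow> \<not>(p<x \<and> x<mb)"
    "\<forall>x. l < x \<and> x < r \<longrightarrow> \<not>(bb \<le> x \<and> x < q)"
    "l < e" "e<r" "p<e" "e<q" "l < d" "d < r" "\<not>(p<d \<and> d<q)"
  shows False
proof (cases "d \<le> p")
  case True
  define x where "x = (p + min mb r)/2"
  have "p < x" "x < mb" "x < r" "l < x" using True assms unfolding x_def by auto
  then show ?thesis using assms(4) by blast
next
  case False
  define x where "x = (max bb l + q)/2"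
  have "bb \<le> x" "x < q" "x < r" "l < x" using False assms unfolding x_def by auto
  then show ?thesis using assms(5) by blast
qed

lemma dest_sub: assumes "fst s \<in> A" "fst s' \<in> A" "e \<in> sym_dest m s" "e \<in> sym_supt s'"
  shows "sym_dest m s \<subseteq> sym_supt s'"
proof (cases "fst s = fst s'")
  case True
  then show ?thesis using dest_supt[OF assms(1)] unfolding sym_supt_def by simp
next
  case False
  define a where "a = fst s"
  define b where "b = fst s'"
  have a: "a \<in> A" and b: "b \<in> A" and ab: "a \<noteq> b" using assms False a_def b_def by auto
  have G0: "src_b m a \<inter> dest_b m b = {}" "src_b m b \<inter> dest_b m a = {}"
     "src_b m b \<inter> src_b m a = {}" "dest_b m b \<inter> dest_b m a = {}"
    using pair_all a b ab by metis+
  have G: "src_b m b \<inter> src_b m a = {}" "dest_b m b \<inter> dest_b m a = {}"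
     "dest_b m b \<inter> src_b m a = {}" "src_b m b \<inter> dest_b m a = {}"
    using G0 by (auto simp: Int_commute)
  note ba = basic[OF a] and bb = basic[OF b]
  have S: "sym_supt s' = {ltp b<..<rtp b}" using bb(6) b_def sym_supt_def by simp
  show ?thesis
  proof
    fix d assume d: "d \<in> sym_dest m s"
    show "d \<in> sym_supt s'"
    proof (rule ccontr)
      assume nd: "d \<notin> sym_supt s'"
      have nd': "\<not> (ltp b < d \<and> d < rtp b)" using nd S by simp
      have e': "ltp b < e" "e < rtp b" using assms(4) S by auto
      show False
      proof (cases "snd s")
        case True
        have D: "sym_dest m s = {a (m a)..<rtp a}"
          using True a_def unfolding sym_dest_def dest_b_def by simp
        have d': "a (m a) \<le> d" "d < rtp a" using d D by auto
        have ee: "a (m a) \<le> e" "e < rtp a" using assms(3) D by auto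
        have X1: "\<forall>x. a (m a) \<le> x \<and> x < rtp a \<longrightarrow> \<not>(ltp b<x \<and> x<m b)"
          using G(4) unfolding src_b_def dest_b_def by (auto simp: disjoint_iff)
        have X2: "\<forall>x. a (m a) \<le> x \<and> x < rtp a \<longrightarrow> \<not>(b (m b) \<le> x \<and> x < rtp b)"
          using G(2) unfolding src_b_def dest_b_def by (auto simp: disjoint_iff)
        show False
          by (rule geo1[OF bb(1,2,3) X1 X2 ee(1,2) e' d' nd'])
      next
        case False
        have D: "sym_dest m s = {ltp a<..<m a}"
          using False a_def unfolding sym_dest_def src_b_def by simp
        have d': "ltp a < d" "d < m a" using d D by auto
        have ee: "ltp a < e" "e < m a" using assms(3) D by auto
        have X1: "\<forall>x. ltp a < x \<and> x < m a \<longrightarrow> \<not>(ltp b<x \<and> x<m b)"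
          using G(1) unfolding src_b_def dest_b_def by (auto simp: disjoint_iff)
        have X2: "\<forall>x. ltp a < x \<and> x < m a \<longrightarrow> \<not>(b (m b) \<le> x \<and> x < rtp b)"
          using G(3) unfolding src_b_def dest_b_def by (auto simp: disjoint_iff)
        show False
          by (rule geo2[OF bb(1,2,3) X1 X2 ee(1,2) e' d' nd'])
      qed
    qed
  qed
qed

lemma act_snoc: "act t (u @ [s]) = sym_eval s (act t u)"
  unfolding act_def by simp

lemma take1: "w \<noteq> [] \<Longrightarrow> act t (take (Suc 0) w) = sym_eval (w ! 0) t"
  by (cases w) (auto simp: act_def)

lemma symA: "is_A_word A w \<Longrightarrow> k < length w \<Longrightarrow> fst (w ! k) \<in> A"
  unfolding is_A_word_def by auto

lemma J_facts: assumes "t \<in> J m w" shows "w \<noteq> []" "t \<in> sym_supt (w!0)" "t \<notin> sym_src m (w!0)"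
  using assms by (cases w; auto simp: J_def)+

lemma fr: "freely_reduced w \<Longrightarrow> Suc k < length w \<Longrightarrow>
    \<not> (fst (w ! k) = fst (w ! Suc k) \<and> snd (w ! k) \<noteq> snd (w ! Suc k))"
  unfolding freely_reduced_def by blast

lemma forward:
  assumes w: "is_A_word A w" and t: "t \<in> J m w" and f: "freely_reduced w"
    and c: "\<forall>i. Suc i < length w \<longrightarrow> sym_dest m (w ! i) \<subseteq> sym_supt (w ! Suc i)"
  shows "\<forall>k<length w. act t (take (Suc k) w) \<in> sym_dest m (w ! k)"
proof (intro allI impI)
  fix k assume "k < length w"
  then show "act t (take (Suc k) w) \<in> sym_dest m (w ! k)"
  proof (induction k)
    case 0
    then show ?case using take1[OF J_facts(1)[OF t]] ping[OF symA[OF w 0] J_facts(2,3)[OF t]]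
      by simp
  next
    case (Suc k)
    let ?p = "act t (take (Suc k) w)"
    have p: "?p \<in> sym_dest m (w ! k)" using Suc by simp
    have A1: "fst (w ! k) \<in> A" "fst (w ! Suc k) \<in> A" using symA[OF w] Suc by auto
    have "?p \<in> sym_supt (w ! Suc k)" using c Suc p by blast
    moreover have "?p \<notin> sym_src m (w ! Suc k)"
      using disj[OF A1 fr[OF f Suc.prems]] p by blast
    ultimately have "sym_eval (w ! Suc k) ?p \<in> sym_dest m (w ! Suc k)"
      using ping[OF A1(2)] by blast
    moreover have "take (Suc (Suc k)) w = take (Suc k) w @ [w ! Suc k]"
      by (rule take_Suc_conv_app_nth) (use Suc.prems in simp)
    then have "act t (take (Suc (Suc k)) w) = sym_eval (w ! Suc k) (act t (take (Suc k) w))"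
      by (simp only: act_snoc)
    ultimately show ?case by simp
  qed
qed

lemma backward:
  assumes w: "is_A_word A w" and t: "t \<in> J m w" and lr: "locally_reduced_at t w"
  shows "\<forall>k<length w. act t (take (Suc k) w) \<in> sym_dest m (w ! k)"
proof (intro allI impI)
  have f: "freely_reduced w" using lr unfolding locally_reduced_at_def by blast
  fix k assume "k < length w"
  then show "act t (take (Suc k) w) \<in> sym_dest m (w ! k)"
  proof (induction k)
    case 0
    then show ?case using take1[OF J_facts(1)[OF t]] ping[OF symA[OF w 0] J_facts(2,3)[OF t]]
      by simp
  next
    case (Suc k)
    let ?p = "act t (take (Suc k) w)"
    have p: "?p \<in> sym_dest m (w ! k)" using Suc by simp
    have A1: "fst (w ! k) \<in> A" "fst (w ! Suc k) \<in> A" using symA[OF w] Suc by auto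
    have dec: "take (Suc k) w @ (w ! Suc k) # drop (Suc (Suc k)) w = w"
      using Suc.prems by (metis Cons_nth_drop_Suc append_take_drop_id)
    have mv: "sym_eval (w ! Suc k) ?p \<noteq> ?p"
      using lr dec unfolding locally_reduced_at_def by (metis act_snoc)
    have p01: "?p \<in> {0..1}" using p dest_supt[OF A1(1)] supt01[OF A1(1)]
      unfolding sym_supt_def by blast
    have "?p \<in> sym_supt (w ! Suc k)" using fixes_out[OF A1(2) p01] mv by blast
    moreover have "?p \<notin> sym_src m (w ! Suc k)"
      using disj[OF A1 fr[OF f Suc.prems]] p by blast
    ultimately have "sym_eval (w ! Suc k) ?p \<in> sym_dest m (w ! Suc k)"
      using ping[OF A1(2)] by blast
    moreover have "take (Suc (Suc k)) w = take (Suc k) w @ [w ! Suc k]"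
      by (rule take_Suc_conv_app_nth) (use Suc.prems in simp)
    then have "act t (take (Suc (Suc k)) w) = sym_eval (w ! Suc k) (act t (take (Suc k) w))"
      by (simp only: act_snoc)
    ultimately show ?case by simp
  qed
qed

lemma main:
  assumes w: "is_A_word A w" and t: "t \<in> J m w"
  shows "locally_reduced_at t w \<longleftrightarrow> freely_reduced w \<and>
     (\<forall>i. Suc i < length w \<longrightarrow> sym_dest m (w ! i) \<subseteq> sym_supt (w ! Suc i))"
proof
  assume lr: "locally_reduced_at t w"
  have f: "freely_reduced w" using lr unfolding locally_reduced_at_def by blast
  note B = backward[OF w t lr]
  have "sym_dest m (w ! i) \<subseteq> sym_supt (w ! Suc i)" if i: "Suc i < length w" for i
  proof -
    let ?p = "act t (take (Suc i) w)"
    have p: "?p \<in> sym_dest m (w ! i)" using B i by simp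
    have A1: "fst (w ! i) \<in> A" "fst (w ! Suc i) \<in> A" using symA[OF w] i by auto
    have dec: "take (Suc i) w @ (w ! Suc i) # drop (Suc (Suc i)) w = w"
      using i by (metis Cons_nth_drop_Suc append_take_drop_id)
    have mv: "sym_eval (w ! Suc i) ?p \<noteq> ?p"
      using lr dec unfolding locally_reduced_at_def by (metis act_snoc)
    have p01: "?p \<in> {0..1}" using p dest_supt[OF A1(1)] supt01[OF A1(1)]
      unfolding sym_supt_def by blast
    have "?p \<in> sym_supt (w ! Suc i)" using fixes_out[OF A1(2) p01] mv by blast
    then show ?thesis using dest_sub[OF A1 p] by blast
  qed
  then show "freely_reduced w \<and>
     (\<forall>i. Suc i < length w \<longrightarrow> sym_dest m (w ! i) \<subseteq> sym_supt (w ! Suc i))" using f by blast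
next
  assume H: "freely_reduced w \<and>
     (\<forall>i. Suc i < length w \<longrightarrow> sym_dest m (w ! i) \<subseteq> sym_supt (w ! Suc i))"
  note F = forward[OF w t conjunct1[OF H] conjunct2[OF H]]
  have "act t (u @ [s]) \<noteq> act t u" if us: "u @ s # v = w" for u s v
  proof -
    define k where "k = length u"
    have k: "k < length w" "u = take k w" "s = w ! k" using us k_def by auto
    show ?thesis
    proof (cases k)
      case 0
      then have "u = []" using k by simp
      then show ?thesis using moves[OF symA[OF w k(1)] ] J_facts(2)[OF t] k 0
        by (simp add: act_def)
    next
      case (Suc j)
      have p: "act t u \<in> sym_dest m (w ! j)" using F k Suc by simp
      have A1: "fst (w ! j) \<in> A" using symA[OF w] k Suc by simp
      have "act t u \<in> sym_supt s" using H k Suc p by auto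
      then show ?thesis using moves[OF symA[OF w k(1)]] k by (simp add: act_snoc)
    qed
  qed
  then show "locally_reduced_at t w" using H unfolding locally_reduced_at_def by blast
qed

end

theorem lemma5p3:
  fixes A :: "(real \<Rightarrow> real) set" and m :: "(real \<Rightarrow> real) \<Rightarrow> real"
  assumes "geom_fast_with A m"
  shows "(\<forall>w x. is_A_word A w \<longrightarrow> x \<in> J m w \<longrightarrow>
            (locally_reduced_at x w \<longleftrightarrow>
               freely_reduced w \<and>
               (\<forall>i. Suc i < length w \<longrightarrow> sym_dest m (w ! i) \<subseteq> sym_supt (w ! Suc i))))
       \<and> (\<forall>w. is_A_word A w \<longrightarrow> freely_reduced w \<longrightarrow>
            (\<exists>x\<in>J m w. locally_reduced_at x w) \<longrightarrow>
            (\<forall>y\<in>J m w. locally_reduced_at y w))"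
proof -
  interpret gf A m using assms by unfold_locales
  show ?thesis using main by blast
qed

end
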